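(* Consider a sequence of instances of the model below indexed by $n\to\infty$, where $G=G_n$ is an arbitrary (deterministic) graph on $n$ vertices with average degree $d=d_n$ and $\varepsilon=\varepsilon_n\in(0,1/2)$ may depend on $n$. Let $0<\tau<2/3$ be fixed and assume $d\le n^{\tau}$. If exact recovery with high probability is possible, then $$\frac{d}{\log n}\ \ge\ \frac{1-3\tau/2}{D(1/2\,\|\,\varepsilon)}-\frac{1}{\log n}+o\!\left(\frac{1}{D(1/2\,\|\,\varepsilon)}\right).$$ In particular, if $\varepsilon\to 1/2$, this necessary condition implies $$\frac{d}{\log n}\ \ge\ \frac{2(1-3\tau/2)}{(1-2\varepsilon)^2}+o\!\left(\frac{1}{(1-2\varepsilon)^2}\right).$$
   Context: Model: $G=(V,E)$ is a simple undirected graph with $V=[n]$, $m=|E|$, and incidence matrix $B_G\in\{0,1\}^{m\times n}$ ($B_G(e,v)=1$ iff edge $e$ is incident to vertex $v$). An unknown vector $x\in\{0,1\}^n$ (uniform prior) is observed through $Y=B_G x\oplus Z\in\{0,1\}^m$, i.e. $Y_{(i,j)}=x_i\oplus x_j\oplus Z_{(i,j)}$, where all arithmetic is modulo 2 and $Z$ has i.i.d. Bernoulli$(\varepsilon)$ entries, $\varepsilon\in[0,1/2]$. Exact recovery with high probability means there is a decoder (equivalently, the maximum-likelihood decoder) which, from $Y$ (and knowledge of $G,\varepsilon$), outputs an element of $\{x,\ x\oplus 1^n\}$ with probability tending to $1$ as $n\to\infty$. The average degree is $d=2|E|/n$. All logarithms are natural, and $D(1/2\,\|\,\varepsilon)=\tfrac12\log\frac{1}{2\varepsilon}+\tfrac12\log\frac{1}{2(1-\varepsilon)}$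 is the Kullback–Leibler divergence between Bernoulli$(1/2)$ and Bernoulli$(\varepsilon)$. *)

theory Defs
  imports "HOL-Analysis.Analysis" "HOL-Library.Landau_Symbols"
begin

definition simple_graph :: "nat \<Rightarrow> (nat \<times> nat) set \<Rightarrow> bool" where
  "simple_graph n E \<longleftrightarrow> (\<forall>(i,j)\<in>E. i < j \<and> j < n)"

definition avg_degree :: "nat \<Rightarrow> (nat \<times> nat) set \<Rightarrow> real" where
  "avg_degree n E = 2 * real (card E) / real n"

text \<open>The unknown vector x in {0,1}^n is encoded by the set X = {i < n. x_i = 1};
  the noise vector Z by the set of edges where Z_e = 1. The observation
  Y_(i,j) = x_i xor x_j xor Z_(i,j) on edges (set to False off E).\<close>
definition observation :: "(nat \<times> nat) set \<Rightarrow> nat set \<Rightarrow> (nat \<times> nat) set \<Rightarrow> (nat \<times> nat \<Rightarrow> bool)" where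
  "observation E X Z = (\<lambda>(i,j). if (i,j) \<in> E then (((i \<in> X) \<noteq> (j \<in> X)) \<noteq> ((i,j) \<in> Z)) else False)"

text \<open>Probability that decoder dec outputs x or its complement x xor 1^n,
  with x uniform on {0,1}^n and Z i.i.d. Bernoulli(eps) on the edges.\<close>
definition success_prob ::
  "nat \<Rightarrow> (nat \<times> nat) set \<Rightarrow> real \<Rightarrow> ((nat \<times> nat \<Rightarrow> bool) \<Rightarrow> nat set) \<Rightarrow> real" where
  "success_prob n E eps dec =
     (\<Sum>X\<in>Pow {..<n}. \<Sum>Z\<in>Pow E.
        eps ^ card Z * (1 - eps) ^ (card E - card Z) *
        (if dec (observation E X Z) = X \<or> dec (observation E X Z) = {..<n} - X then 1 else 0))
     / 2 ^ n"

definition exact_recovery_whp :: "(nat \<Rightarrow> (nat \<times> nat) set) \<Rightarrow> (nat \<Rightarrow> real) \<Rightarrow> bool" where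
  "exact_recovery_whp G eps \<longleftrightarrow>
     (\<exists>dec :: nat \<Rightarrow> (nat \<times> nat \<Rightarrow> bool) \<Rightarrow> nat set.
        (\<lambda>n. success_prob n (G n) (eps n) (dec n)) \<longlonglongrightarrow> 1)"

definition KL_half :: "real \<Rightarrow> real" where
  "KL_half eps = 1/2 * ln (1 / (2 * eps)) + 1/2 * ln (1 / (2 * (1 - eps)))"

end

theory Submission
  imports Defs
begin


definition sd :: "'a set \<Rightarrow> 'a set \<Rightarrow> 'a set" where "sd A B = (A - B) \<union> (B - A)"

definition wt :: "real \<Rightarrow> 'a set \<Rightarrow> 'a set \<Rightarrow> real" where
  "wt e E Z = e ^ card Z * (1 - e) ^ card (E - Z)"

definition mx :: "real \<Rightarrow> 'a set \<Rightarrow> real" where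
  "mx e A = (\<Sum>z\<in>Pow A. max (wt e A z) (wt e A (A - z)))"

lemma wt_nonneg: "0 \<le> e \<Longrightarrow> e \<le> 1 \<Longrightarrow> 0 \<le> wt e E Z"
  by (simp add: wt_def)

lemma sum_wt: assumes "finite E" shows "(\<Sum>Z\<in>Pow E. wt e E Z) = 1"
proof -
  have "(\<Prod>x\<in>E. e + (1 - e)) = (\<Sum>X\<in>Pow E. (\<Prod>x\<in>X. e) * (\<Prod>x\<in>E-X. 1 - e))"
    by (rule prod_add[OF assms])
  then show ?thesis by (simp add: wt_def)
qed

lemma sum_Pow_split:
  assumes "finite A" "finite B" "A \<inter> B = {}"
  shows "(\<Sum>Z\<in>Pow (A \<union> B). f Z) = (\<Sum>Y\<in>Pow B. \<Sum>z\<in>Pow A. f (z \<union> Y))"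
proof -
  have bij: "bij_betw (\<lambda>(z,Y). z \<union> Y) (Pow A \<times> Pow B) (Pow (A \<union> B))"
  proof (rule bij_betwI[where g="\<lambda>Z. (Z \<inter> A, Z \<inter> B)"])
  qed (use assms in auto)
  have "(\<Sum>Z\<in>Pow (A \<union> B). f Z) = (\<Sum>p\<in>Pow A \<times> Pow B. f ((\<lambda>(z,Y). z \<union> Y) p))"
    using sum.reindex_bij_betw[OF bij, of f] by simp
  also have "\<dots> = (\<Sum>z\<in>Pow A. \<Sum>Y\<in>Pow B. f (z \<union> Y))"
    by (simp add: sum.cartesian_product split_def)
  also have "\<dots> = (\<Sum>Y\<in>Pow B. \<Sum>z\<in>Pow A. f (z \<union> Y))"
    by (rule sum.swap)
  finally show ?thesis .
qed

lemma wt_split: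
  assumes "finite A" "finite B" "A \<inter> B = {}" "z \<subseteq> A" "Y \<subseteq> B"
  shows "wt e (A \<union> B) (z \<union> Y) = wt e A z * wt e B Y"
proof -
  have f: "finite z" "finite Y" using assms finite_subset by blast+
  have "card (z \<union> Y) = card z + card Y" using assms f by (intro card_Un_disjoint) auto
  moreover have "(A \<union> B) - (z \<union> Y) = (A - z) \<union> (B - Y)" using assms by auto
  moreover have "card ((A - z) \<union> (B - Y)) = card (A - z) + card (B - Y)"
    using assms by (intro card_Un_disjoint) auto
  ultimately show ?thesis by (simp add: wt_def power_add mult_ac)
qed

lemma sum_Pow_compl:
  assumes "finite A"
  shows "(\<Sum>z\<in>Pow A. f (A - z)) = (\<Sum>z\<in>Pow A. f z)"
proof -
  have bij: "bij_betw (\<lambda>z. A - z) (Pow A) (Pow A)"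
    by (rule bij_betwI[where g="\<lambda>z. A - z"]) auto
  show ?thesis using sum.reindex_bij_betw[OF bij, of f] by simp
qed

lemma sum_Pow_insert:
  assumes "finite S" "a \<notin> S"
  shows "(\<Sum>T\<in>Pow (insert a S). f T) = (\<Sum>T\<in>Pow S. f T) + (\<Sum>T\<in>Pow S. f (insert a T))"
proof -
  have "(\<Sum>T\<in>Pow (insert a S). f T) = (\<Sum>T\<in>Pow S. f T) + (\<Sum>T\<in>insert a ` Pow S. f T)"
    unfolding Pow_insert by (rule sum.union_disjoint) (use assms in auto)
  also have "(\<Sum>T\<in>insert a ` Pow S. f T) = (\<Sum>T\<in>Pow S. f (insert a T))"
  proof -
    have "inj_on (insert a) (Pow S)" unfolding inj_on_def using assms
      by (metis PowD Set.set_insert insert_absorb insert_ident subset_iff)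
    then show ?thesis by (simp add: sum.reindex)
  qed
  finally show ?thesis .
qed

lemma orbit_bound:
  assumes "finite S" "finite E" "\<forall>v\<in>S. \<delta> v \<subseteq> E" "disjoint_family_on \<delta> S"
    "\<forall>Z. Z \<subseteq> E \<longrightarrow> (\<Sum>T\<in>Pow S. u (sd Z (\<Union>(\<delta> ` T)))) \<le> 1"
    "\<forall>Z. u Z \<ge> 0" "0 \<le> e" "e \<le> 1"
  shows "(\<Sum>Z\<in>Pow E. wt e E Z * u Z) \<le> (\<Prod>v\<in>S. mx e (\<delta> v) / 2)"
  using assms
proof (induction S arbitrary: E u rule: finite_induct)
  case empty
  have "(\<Sum>Z\<in>Pow E. wt e E Z * u Z) \<le> (\<Sum>Z\<in>Pow E. wt e E Z)"
  proof (rule sum_mono)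
    fix Z assume "Z \<in> Pow E"
    then have "u Z \<le> 1" using empty.prems(4)[rule_format, of Z] by (simp add: sd_def)
    then show "wt e E Z * u Z \<le> wt e E Z"
      using mult_left_le[OF _ wt_nonneg[OF empty.prems(6,7)]] by blast
  qed
  then show ?case using sum_wt[OF empty.prems(1)] by simp
next
  case (insert a S)
  define A where "A = \<delta> a"
  define E' where "E' = E - A"
  have fA: "finite A" and fE': "finite E'" and dis: "A \<inter> E' = {}" and EAE: "E = A \<union> E'"
    using insert.prems A_def E'_def finite_subset by auto
  have dvS: "\<forall>v\<in>S. \<delta> v \<subseteq> E'"
  proof
    fix v assume v: "v \<in> S"
    then have "v \<noteq> a" using insert.hyps by auto
    then have "\<delta> v \<inter> \<delta> a = {}" using insert.prems(3) v unfolding disjoint_family_on_def by auto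
    then show "\<delta> v \<subseteq> E'" using insert.prems(2) v A_def E'_def by auto
  qed
  have disS: "disjoint_family_on \<delta> S" using insert.prems(3) disjoint_family_on_mono by blast
  define mw where "mw z = max (wt e A z) (wt e A (A - z))" for z
  define v where "v z Y = u (z \<union> Y) + u ((A - z) \<union> Y)" for z Y
  have inner: "(\<Sum>z\<in>Pow A. wt e A z * u (z \<union> Y)) \<le> (\<Sum>z\<in>Pow A. mw z * v z Y) / 2" for Y
  proof -
    have "(\<Sum>z\<in>Pow A. wt e A z * u (z \<union> Y)) = (\<Sum>z\<in>Pow A. wt e A (A - z) * u ((A - z) \<union> Y))"
      using sum_Pow_compl[OF fA, of "\<lambda>z. wt e A z * u (z \<union> Y)"] by simp
    then have "2 * (\<Sum>z\<in>Pow A. wt e A z * u (z \<union> Y)) =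
       (\<Sum>z\<in>Pow A. wt e A z * u (z \<union> Y) + wt e A (A - z) * u ((A - z) \<union> Y))"
      by (simp add: sum.distrib)
    also have "\<dots> \<le> (\<Sum>z\<in>Pow A. mw z * v z Y)"
    proof (rule sum_mono)
      fix z
      have "wt e A z * u (z \<union> Y) \<le> mw z * u (z \<union> Y)"
        using insert.prems(5) by (intro mult_right_mono) (auto simp: mw_def)
      moreover have "wt e A (A - z) * u ((A - z) \<union> Y) \<le> mw z * u ((A - z) \<union> Y)"
        using insert.prems(5) by (intro mult_right_mono) (auto simp: mw_def)
      ultimately show "wt e A z * u (z \<union> Y) + wt e A (A - z) * u ((A - z) \<union> Y) \<le> mw z * v z Y"
        by (simp add: v_def distrib_left)
    qed
    finally show ?thesis by simp
  qed
  have IH: "(\<Sum>Y\<in>Pow E'. wt e E' Y * v z Y) \<le> (\<Prod>w\<in>S. mx e (\<delta> w) / 2)" if z: "z \<subseteq> A" for z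
  proof (rule insert.IH[OF fE' dvS disS _ _ insert.prems(6,7)])
    show "\<forall>Z. 0 \<le> v z Z" using insert.prems(5) by (simp add: v_def add_nonneg_nonneg)
    show "\<forall>Y. Y \<subseteq> E' \<longrightarrow> (\<Sum>T\<in>Pow S. v z (sd Y (\<Union> (\<delta> ` T)))) \<le> 1"
    proof (intro allI impI)
      fix Y assume Y: "Y \<subseteq> E'"
      have ZE: "z \<union> Y \<subseteq> E" using Y z EAE by auto
      have B: "\<Union> (\<delta> ` T) \<subseteq> E'" if "T \<in> Pow S" for T using dvS that by auto
      have e1: "z \<union> sd Y (\<Union> (\<delta> ` T)) = sd (z \<union> Y) (\<Union> (\<delta> ` T))" if "T \<in> Pow S" for T
        using B[OF that] z Y dis unfolding sd_def by blast
      have e2: "(A - z) \<union> sd Y (\<Union> (\<delta> ` T)) = sd (z \<union> Y) (\<Union> (\<delta> ` (insert a T)))" if "T \<in> Pow S" for T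
        using B[OF that] z Y dis unfolding sd_def A_def by auto
      have "(\<Sum>T\<in>Pow S. v z (sd Y (\<Union> (\<delta> ` T)))) =
          (\<Sum>T\<in>Pow S. u (sd (z \<union> Y) (\<Union> (\<delta> ` T)))) + (\<Sum>T\<in>Pow S. u (sd (z \<union> Y) (\<Union> (\<delta> ` (insert a T)))))"
        unfolding v_def sum.distrib using e1 e2 by (intro arg_cong2[where f="(+)"] sum.cong) auto
      also have "\<dots> = (\<Sum>T\<in>Pow (insert a S). u (sd (z \<union> Y) (\<Union> (\<delta> ` T))))"
        using sum_Pow_insert[OF insert.hyps(1,2), of "\<lambda>T. u (sd (z \<union> Y) (\<Union> (\<delta> ` T)))"] by simp
      also have "\<dots> \<le> 1" using insert.prems(4) ZE by blast
      finally show "(\<Sum>T\<in>Pow S. v z (sd Y (\<Union> (\<delta> ` T)))) \<le> 1" .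
    qed
  qed
  have "(\<Sum>Z\<in>Pow E. wt e E Z * u Z) = (\<Sum>Y\<in>Pow E'. \<Sum>z\<in>Pow A. wt e E (z \<union> Y) * u (z \<union> Y))"
    unfolding EAE by (rule sum_Pow_split[OF fA fE' dis])
  also have "\<dots> = (\<Sum>Y\<in>Pow E'. wt e E' Y * (\<Sum>z\<in>Pow A. wt e A z * u (z \<union> Y)))"
    unfolding sum_distrib_left
    by (intro sum.cong refl) (simp add: EAE wt_split[OF fA fE' dis] mult_ac)
  also have "\<dots> \<le> (\<Sum>Y\<in>Pow E'. wt e E' Y * ((\<Sum>z\<in>Pow A. mw z * v z Y) / 2))"
    by (intro sum_mono mult_left_mono inner wt_nonneg insert.prems(6,7))
  also have "\<dots> = (\<Sum>z\<in>Pow A. mw z * (\<Sum>Y\<in>Pow E'. wt e E' Y * v z Y)) / 2"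
    by (simp add: sum_divide_distrib sum_distrib_left mult_ac sum.swap[where A="Pow E'"])
  also have "\<dots> \<le> (\<Sum>z\<in>Pow A. mw z * (\<Prod>w\<in>S. mx e (\<delta> w) / 2)) / 2"
    using IH by (intro divide_right_mono sum_mono mult_left_mono)
      (auto simp: mw_def intro: max.coboundedI1 wt_nonneg insert.prems)
  also have "\<dots> = (\<Prod>w\<in>insert a S. mx e (\<delta> w) / 2)"
    using insert.hyps by (simp add: mx_def mw_def A_def sum_distrib_right[symmetric])
  finally show ?case .
qed

lemma central_aux:
  fixes m X Y Z :: nat
  assumes "Suc m * X = Suc (Suc (2*m)) * Y" "Suc m * Y = Suc (2*m) * Z"
  shows "Suc m * X = 2 * Suc (2*m) * Z"
proof -
  have "Suc m * (Suc m * X) = Suc m * (2 * Suc (2*m) * Z)"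
  proof -
    have "Suc m * (Suc m * X) = Suc m * (Suc (Suc (2*m)) * Y)" using assms(1) by simp
    also have "\<dots> = Suc (Suc (2*m)) * (Suc m * Y)" by (simp add: algebra_simps)
    also have "\<dots> = Suc (Suc (2*m)) * (Suc (2*m) * Z)" using assms(2) by simp
    also have "\<dots> = Suc m * (2 * Suc (2*m) * Z)" by (simp add: algebra_simps)
    finally show ?thesis .
  qed
  then show ?thesis using mult_left_cancel[of "Suc m"] by blast
qed

lemma central_binom_rec: "Suc m * (Suc (Suc (2*m)) choose Suc m) = 2 * Suc (2*m) * ((2*m) choose m)"
proof (rule central_aux)
  show "Suc m * (Suc (Suc (2*m)) choose Suc m) = Suc (Suc (2*m)) * (Suc (2*m) choose m)"
    by (rule Suc_times_binomial)
  have d: "Suc (2*m) - Suc m = m" by simp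
  have "Suc m \<le> Suc (2*m)" by simp
  from binomial_symmetric[OF this] have "Suc (2*m) choose Suc m = Suc (2*m) choose m" by (simp only: d)
  then have b: "(Suc (2*m) choose m) = (Suc (2*m) choose Suc m)" by (rule sym)
  show "Suc m * (Suc (2*m) choose m) = Suc (2*m) * ((2*m) choose m)"
    unfolding b by (rule Suc_times_binomial)
qed

lemma central_binom_sq: "m \<ge> 1 \<Longrightarrow> (16::real)^m \<le> 4 * real m * (real ((2*m) choose m))^2"
proof (induction m rule: dec_induct)
  case base then show ?case by simp
next
  case (step m)
  define C where "C = real ((2*m) choose m)"
  define C' where "C' = real ((2*(m+1)) choose (m+1))"
  have rec': "real (m+1) * C' = 2*(2*real m+1) * C"
  proof -
    have e: "2*(m+1) = Suc (Suc (2*m))" "m+1 = Suc m" by simp_all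
    have "real (Suc m * (Suc (Suc (2*m)) choose Suc m)) = real (2 * Suc (2*m) * ((2*m) choose m))"
      using central_binom_rec[of m] by (simp only:)
    then have "real (Suc m) * real (Suc (Suc (2*m)) choose Suc m) = 2 * real (Suc (2*m)) * real ((2*m) choose m)"
      by (simp only: of_nat_mult of_nat_numeral)
    then show ?thesis unfolding C_def C'_def e by (simp only: of_nat_Suc of_nat_mult, simp)
  qed
  have "real (m+1) * 16^(m+1) = 16 * (real (m+1) * 16^m)" by simp
  also have "\<dots> \<le> 16 * (real (m+1) * (4 * real m * C^2))"
    using step.IH unfolding C_def by (intro mult_left_mono) auto
  also have "\<dots> \<le> 16 * ((2 * real m + 1)^2 * C^2)"
  proof -
    have "real (m+1) * (4 * real m) \<le> (2 * real m + 1)^2" by (simp add: power2_eq_square algebra_simps)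
    then have "real (m+1) * (4 * real m) * C^2 \<le> (2 * real m + 1)^2 * C^2" by (rule mult_right_mono) simp
    then have "real (m+1) * (4 * real m * C^2) \<le> (2 * real m + 1)^2 * C^2" by (metis mult.assoc)
    then show ?thesis by linarith
  qed
  also have "\<dots> = 4 * (2*(2*real m+1) * C)^2"
    by (simp add: power_mult_distrib power2_eq_square algebra_simps)
  also have "\<dots> = 4 * (real (m+1) * C')^2" by (simp only: rec')
  also have "\<dots> = real (m+1) * (4 * real (m+1) * C'^2)"
    by (simp only: power_mult_distrib power2_eq_square mult_ac)
  finally have "real (m+1) * 16^(m+1) \<le> real (m+1) * (4 * real (m+1) * C'^2)" .
  then have "16^(m+1) \<le> 4 * real (m+1) * C'^2"
    by (rule mult_left_le_imp_le) simp
  then show ?case unfolding C'_def by (simp only: Suc_eq_plus1)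
qed

lemma central_binom_lower: "m \<ge> 1 \<Longrightarrow> (4::real)^m \<le> 2 * sqrt m * real ((2*m) choose m)"
proof -
  assume m: "m \<ge> 1"
  have "((4::real)^m)^2 = 16^m" by (simp add: power2_eq_square power_mult_distrib[symmetric])
  also have "\<dots> \<le> 4 * real m * (real ((2*m) choose m))^2" by (rule central_binom_sq[OF m])
  also have "\<dots> = (2 * sqrt m * real ((2*m) choose m))^2" by (simp add: power_mult_distrib)
  finally show ?thesis
    by (rule power2_le_imp_le) simp
qed

lemma binom_half: "2 * (k choose ((k+1) div 2)) \<ge> (2*((k+1) div 2)) choose ((k+1) div 2)"
proof (cases "even k")
  case True
  then obtain j where "k = 2*j" by auto
  then show ?thesis by simp
next
  case False
  then obtain j where k: "k = 2*j+1" by (metis oddE)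
  then have m: "(k+1) div 2 = j+1" by simp
  have "(2*j+2 choose (j+1)) = (2*j+1 choose j) + (2*j+1 choose (j+1))"
    using binomial_Suc_Suc[of "2*j+1" j] by simp
  moreover have "(2*j+1 choose j) = (2*j+1 choose (j+1))"
    using binomial_symmetric[of "j+1" "2*j+1"] by simp
  ultimately show ?thesis using k m by simp
qed

lemma mx_bound:
  assumes "finite A" "0 \<le> e" "e \<le> 1/2"
  defines "m \<equiv> (card A + 1) div 2"
  shows "mx e A \<le> 2 - real ((2*m) choose m) * (e*(1-e))^m / 2"
proof -
  define k where "k = card A"
  have mk: "m \<le> k" "k - m \<le> m" unfolding m_def k_def by auto
  have e1: "0 \<le> 1 - e" "1 - e \<le> 1" "e \<le> 1" using assms by auto
  have fin: "finite (Pow A)" using assms by simp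
  have max_eq: "max a b = a + b - min a b" for a b :: real by (simp add: max_def min_def)
  have "mx e A = (\<Sum>z\<in>Pow A. wt e A z) + (\<Sum>z\<in>Pow A. wt e A (A - z)) - (\<Sum>z\<in>Pow A. min (wt e A z) (wt e A (A - z)))"
    unfolding mx_def max_eq by (simp add: sum_subtractf sum.distrib)
  also have "(\<Sum>z\<in>Pow A. wt e A (A - z)) = 1"
    using sum_Pow_compl[OF assms(1), of "wt e A"] sum_wt[OF assms(1)] by simp
  finally have mx_eq: "mx e A = 2 - (\<Sum>z\<in>Pow A. min (wt e A z) (wt e A (A - z)))"
    using sum_wt[OF assms(1)] by simp
  define W where "W = {z. z \<subseteq> A \<and> card z = m}"
  have WP: "W \<subseteq> Pow A" unfolding W_def by auto
  have cardW: "card W = k choose m" unfolding W_def k_def using n_subsets[OF assms(1)] by simp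
  have mins: "min (wt e A z) (wt e A (A - z)) \<ge> (e*(1-e))^m" if "z \<in> W" for z
  proof -
    have z: "z \<subseteq> A" "card z = m" using that W_def by auto
    have cAz: "card (A - z) = k - m" using z assms(1) k_def by (simp add: card_Diff_subset finite_subset)
    have Az: "A - (A - z) = z" using z by auto
    have p1: "(1-e)^(k-m) \<ge> (1-e)^m" using mk e1 by (intro power_decreasing) auto
    have p2: "e^(k-m) \<ge> e^m" using mk assms by (intro power_decreasing) auto
    have "wt e A z = e^m * (1-e)^(k-m)" using z cAz by (simp add: wt_def)
    also have "\<dots> \<ge> e^m * (1-e)^m" using p1 assms by (intro mult_left_mono) auto
    finally have a: "wt e A z \<ge> (e*(1-e))^m" by (simp add: power_mult_distrib)
    have "wt e A (A - z) = e^(k-m) * (1-e)^m" using z cAz Az by (simp add: wt_def)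
    also have "\<dots> \<ge> e^m * (1-e)^m" using p2 e1 by (intro mult_right_mono) auto
    finally have b: "wt e A (A - z) \<ge> (e*(1-e))^m" by (simp add: power_mult_distrib)
    show ?thesis using a b by (rule min.boundedI)
  qed
  have "real (k choose m) * (e*(1-e))^m = (\<Sum>z\<in>W. (e*(1-e))^m)" using cardW by simp
  also have "\<dots> \<le> (\<Sum>z\<in>W. min (wt e A z) (wt e A (A - z)))" by (rule sum_mono[OF mins])
  also have "\<dots> \<le> (\<Sum>z\<in>Pow A. min (wt e A z) (wt e A (A - z)))"
    by (rule sum_mono2[OF fin WP]) (use e1 assms in \<open>auto intro!: wt_nonneg\<close>)
  finally have s: "real (k choose m) * (e*(1-e))^m \<le> (\<Sum>z\<in>Pow A. min (wt e A z) (wt e A (A - z)))" .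
  have "real ((2*m) choose m) \<le> 2 * real (k choose m)"
    using binom_half[of k] unfolding m_def k_def by linarith
  moreover have "0 \<le> (e*(1-e))^m" using assms by simp
  ultimately have "real ((2*m) choose m) * (e*(1-e))^m \<le> 2 * real (k choose m) * (e*(1-e))^m"
    by (rule mult_right_mono)
  then have "real ((2*m) choose m) * (e*(1-e))^m / 2 \<le> real (k choose m) * (e*(1-e))^m"
    by simp
  then have "real ((2*m) choose m) * (e*(1-e))^m / 2 \<le> (\<Sum>z\<in>Pow A. min (wt e A z) (wt e A (A - z)))"
    using s by (rule order.trans)
  then show ?thesis unfolding mx_eq by (rule diff_left_mono)
qed

lemma mx_bound2:
  assumes "finite A" "0 < e" "e < 1/2" "card A \<le> K"
  defines "M \<equiv> (K + 1) div 2"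
  shows "mx e A \<le> 2 - (4*e*(1-e))^M / (4 * sqrt (real M + 1))"
proof -
  define m where "m = (card A + 1) div 2"
  define q where "q = 4*e*(1-e)"
  have qe: "q = 1 - (1 - 2*e)^2" unfolding q_def by (simp add: power2_eq_square algebra_simps)
  have "(1 - 2*e)^2 \<le> 1" using assms(2,3) by (intro power_le_one) auto
  then have q: "0 \<le> q" "q \<le> 1" unfolding qe by auto
  have mM: "m \<le> M" unfolding m_def M_def using assms(4) by (simp add: div_le_mono)
  have mb: "mx e A \<le> 2 - real ((2*m) choose m) * (e*(1-e))^m / 2"
    unfolding m_def by (rule mx_bound[OF assms(1)]) (use assms(2,3) in auto)
  have pos: "0 \<le> real ((2*m) choose m) * (e*(1-e))^m" using assms(2,3) by simp
  have key: "q^M / (2 * sqrt (real M + 1)) \<le> real ((2*m) choose m) * (e*(1-e))^m"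
  proof (cases "m = 0")
    case True
    have "q^M \<le> 1" using q by (simp add: power_le_one)
    moreover have "1 \<le> sqrt (real M + 1)" by simp
    ultimately have "q^M \<le> sqrt (real M + 1)" by linarith
    then have "q^M / (2 * sqrt (real M + 1)) \<le> 1/2" by (simp add: divide_simps)
    moreover have "real ((2*m) choose m) * (e*(1-e))^m = 1" using True by simp
    ultimately show ?thesis by linarith
  next
    case False
    then have m1: "m \<ge> 1" by simp
    have "q^M \<le> q^m" using q mM by (intro power_decreasing) auto
    also have "q^m = 4^m * (e*(1-e))^m" unfolding q_def by (simp only: mult.assoc power_mult_distrib)
    also have "\<dots> \<le> 2 * sqrt m * real ((2*m) choose m) * (e*(1-e))^m"
      using central_binom_lower[OF m1] assms(2,3) by (intro mult_right_mono) auto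
    finally have a: "q^M \<le> 2 * sqrt m * (real ((2*m) choose m) * (e*(1-e))^m)" by (simp only: mult.assoc)
    have sm: "sqrt m \<le> sqrt (real M + 1)" using mM by simp
    have "q^M / (2 * sqrt (real M + 1)) \<le> 2 * sqrt m * (real ((2*m) choose m) * (e*(1-e))^m) / (2 * sqrt (real M + 1))"
      using a by (intro divide_right_mono) auto
    also have "\<dots> \<le> 2 * sqrt (real M + 1) * (real ((2*m) choose m) * (e*(1-e))^m) / (2 * sqrt (real M + 1))"
      using sm pos by (intro divide_right_mono mult_right_mono) auto
    also have "\<dots> = real ((2*m) choose m) * (e*(1-e))^m" by simp
    finally show ?thesis .
  qed
  have "q^M / (4 * sqrt (real M + 1)) = (q^M / (2 * sqrt (real M + 1))) / 2" by simp
  also have "\<dots> \<le> real ((2*m) choose m) * (e*(1-e))^m / 2" using key by (rule divide_right_mono) simp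
  finally show ?thesis using mb unfolding q_def by linarith
qed


definition inc :: "(nat \<times> nat) set \<Rightarrow> nat \<Rightarrow> (nat \<times> nat) set" where
  "inc E v = {e\<in>E. fst e = v \<or> snd e = v}"

definition indep :: "(nat \<times> nat) set \<Rightarrow> nat set \<Rightarrow> bool" where
  "indep E S \<longleftrightarrow> (\<forall>(i,j)\<in>E. \<not> (i \<in> S \<and> j \<in> S))"

lemma simple_graph_finite: "simple_graph n E \<Longrightarrow> finite E"
proof -
  assume "simple_graph n E"
  then have "E \<subseteq> {..<n} \<times> {..<n}" unfolding simple_graph_def by auto
  then show ?thesis by (rule finite_subset) auto
qed

lemma card_filter_sum: "finite A \<Longrightarrow> card {x\<in>A. P x} = (\<Sum>x\<in>A. if P x then 1 else (0::nat))"
proof (induction A rule: finite_induct)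
  case (insert a A)
  have "{x \<in> insert a A. P x} = (if P a then insert a {x\<in>A. P x} else {x\<in>A. P x})" by auto
  then show ?case using insert by auto
qed simp

lemma handshake:
  assumes "simple_graph n E"
  shows "(\<Sum>v<n. card (inc E v)) = 2 * card E"
proof -
  have fE: "finite E" using simple_graph_finite[OF assms] .
  have "(\<Sum>v<n. card (inc E v)) = (\<Sum>v<n. \<Sum>e\<in>E. if fst e = v \<or> snd e = v then 1 else 0)"
    unfolding inc_def using fE by (simp add: card_filter_sum)
  also have "\<dots> = (\<Sum>e\<in>E. \<Sum>v<n. if fst e = v \<or> snd e = v then 1 else 0)" by (rule sum.swap)
  also have "\<dots> = (\<Sum>e\<in>E. 2)"
  proof (rule sum.cong[OF refl])
    fix e assume e: "e \<in> E"
    then have lt: "fst e < snd e" "snd e < n" using assms unfolding simple_graph_def by auto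
    have "(\<Sum>v<n. if fst e = v \<or> snd e = v then 1 else 0) = card {v\<in>{..<n}. fst e = v \<or> snd e = v}"
      by (rule card_filter_sum[symmetric]) simp
    also have "{v\<in>{..<n}. fst e = v \<or> snd e = v} = {fst e, snd e}" using lt by auto
    also have "card {fst e, snd e} = 2" using lt by simp
    finally show "(\<Sum>v<n. if fst e = v \<or> snd e = v then 1 else 0) = (2::nat)" .
  qed
  finally show ?thesis by simp
qed

definition nbrs :: "(nat \<times> nat) set \<Rightarrow> nat \<Rightarrow> nat set" where
  "nbrs E v = {w. (v,w) \<in> E \<or> (w,v) \<in> E}"

lemma card_nbrs:
  assumes "simple_graph n E"
  shows "finite (nbrs E v) \<and> card (nbrs E v) \<le> card (inc E v)"
proof -
  have fE: "finite E" using simple_graph_finite[OF assms] .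
  have "nbrs E v = (\<lambda>e. if fst e = v then snd e else fst e) ` inc E v"
  proof
    show "nbrs E v \<subseteq> (\<lambda>e. if fst e = v then snd e else fst e) ` inc E v"
    proof
      fix w assume "w \<in> nbrs E v"
      then consider "(v,w) \<in> E" | "(w,v) \<in> E" unfolding nbrs_def by auto
      then show "w \<in> (\<lambda>e. if fst e = v then snd e else fst e) ` inc E v"
      proof cases
        case 1 then show ?thesis unfolding inc_def by (intro image_eqI[of _ _ "(v,w)"]) auto
      next
        case 2
        then have "w < v" using assms unfolding simple_graph_def by auto
        then show ?thesis using 2 unfolding inc_def by (intro image_eqI[of _ _ "(w,v)"]) auto
      qed
    qed
    show "(\<lambda>e. if fst e = v then snd e else fst e) ` inc E v \<subseteq> nbrs E v"
      unfolding inc_def nbrs_def by auto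
  qed
  moreover have "finite (inc E v)" using fE unfolding inc_def by simp
  ultimately show ?thesis by (metis card_image_le finite_imageI)
qed

lemma greedy_indep:
  assumes "simple_graph n E" "finite L" "\<forall>v\<in>L. card (inc E v) \<le> K"
  shows "\<exists>S\<subseteq>L. indep E S \<and> card L \<le> (K+1) * card S"
  using assms(2,3)
proof (induction "card L" arbitrary: L rule: less_induct)
  case less
  show ?case
  proof (cases "L = {}")
    case True then show ?thesis by (auto simp: indep_def)
  next
    case False
    then obtain v where v: "v \<in> L" by auto
    define L' where "L' = L - insert v (nbrs E v)"
    have fN: "finite (nbrs E v)" and cN: "card (nbrs E v) \<le> K"
      using card_nbrs[OF assms(1), of v] less.prems v by auto
    have sub: "L' \<subset> L" using v unfolding L'_def by auto
    have fL': "finite L'" using less.prems(1) L'_def by simp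
    obtain S' where S': "S' \<subseteq> L'" "indep E S'" "card L' \<le> (K+1) * card S'"
      using less.hyps[OF psubset_card_mono[OF less.prems(1) sub] fL'] less.prems(2) sub by blast
    define S where "S = insert v S'"
    have vS': "v \<notin> S'" using S' L'_def by auto
    have "indep E S"
      unfolding indep_def S_def
    proof (clarify)
      fix i j assume ij: "(i,j) \<in> E" "i \<in> insert v S'" "j \<in> insert v S'"
      have ne: "i \<noteq> j" using ij assms(1) unfolding simple_graph_def by auto
      have nb: "j \<in> nbrs E i" "i \<in> nbrs E j" using ij(1) unfolding nbrs_def by auto
      consider "i = v" | "j = v" | "i \<in> S'" "j \<in> S'" using ij by auto
      then show False
      proof cases
        case 1
        then have "j \<in> S'" using ne ij by auto
        then show False using nb 1 S'(1) L'_def by auto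
      next
        case 2
        then have "i \<in> S'" using ne ij by auto
        then show False using nb 2 S'(1) L'_def by auto
      next
        case 3
        then show False using ij S'(2) unfolding indep_def by auto
      qed
    qed
    moreover have "card L \<le> (K+1) * card S"
    proof -
      have "L \<subseteq> L' \<union> insert v (nbrs E v)" unfolding L'_def by auto
      then have "card L \<le> card (L' \<union> insert v (nbrs E v))"
        using fL' fN by (intro card_mono) auto
      also have "\<dots> \<le> card L' + card (insert v (nbrs E v))" by (rule card_Un_le)
      also have "\<dots> \<le> card L' + (K + 1)" using card_insert_le_m1 fN cN
        by (metis add_le_cancel_left card_insert_if le_SucI not_less_eq_eq Suc_eq_plus1)
      also have "\<dots> \<le> (K+1) * card S' + (K+1)" using S' by simp
      also have "\<dots> = (K+1) * card S" unfolding S_def using vS' finite_subset[OF S'(1) fL'] by simp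
      finally show ?thesis .
    qed
    moreover have "S \<subseteq> L" using S' v sub unfolding S_def by auto
    ultimately show ?thesis by blast
  qed
qed


lemma sd_inj: "inj_on (sd X) A"
  unfolding inj_on_def sd_def by blast

lemma sd_sd: "sd (sd X T) T = X" unfolding sd_def by blast

lemma obs_flip:
  assumes "simple_graph n E" "indep E S" "T \<subseteq> S"
  shows "observation E (sd X T) (sd Z (\<Union>(inc E ` T))) = observation E X Z"
proof
  fix p :: "nat \<times> nat"
  obtain i j where p: "p = (i,j)" by (cases p)
  show "observation E (sd X T) (sd Z (\<Union>(inc E ` T))) p = observation E X Z p"
  proof (cases "(i,j) \<in> E")
    case True
    have nb: "\<not> (i \<in> T \<and> j \<in> T)" using assms(2,3) True unfolding indep_def by auto
    have U: "(i,j) \<in> \<Union>(inc E ` T) \<longleftrightarrow> (i \<in> T \<or> j \<in> T)" using True unfolding inc_def by auto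
    show ?thesis unfolding p observation_def using True nb U by (auto simp: sd_def)
  next
    case False
    then show ?thesis unfolding p observation_def by simp
  qed
qed

lemma card_filter_sum_real: "finite A \<Longrightarrow> (\<Sum>x\<in>A. if P x then 1 else (0::real)) = real (card {x\<in>A. P x})"
  by (simp add: card_filter_sum of_nat_sum if_distrib cong: if_cong)

lemma card_inj_le1:
  assumes "finite A" "inj_on f A"
  shows "card {T\<in>A. f T = a} \<le> 1"
proof -
  have fin: "finite {T\<in>A. f T = a}" using assms(1) by simp
  have "card {T\<in>A. f T = a} \<le> Suc 0"
    unfolding card_le_Suc0_iff_eq[OF fin] using assms(2) by (auto simp: inj_on_def)
  then show ?thesis by simp
qed

lemma two_hits:
  assumes "finite A" "inj_on f A" "inj_on g A"
  shows "(\<Sum>T\<in>A. if f T = a \<or> g T = b then 1 else 0) \<le> (2::real)"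
proof -
  have "(\<Sum>T\<in>A. if f T = a \<or> g T = b then 1 else 0) \<le> (\<Sum>T\<in>A. (if f T = a then 1 else 0) + (if g T = b then 1 else (0::real)))"
    by (intro sum_mono) auto
  also have "\<dots> = real (card {T\<in>A. f T = a}) + real (card {T\<in>A. g T = b})"
    using assms(1) by (simp add: sum.distrib card_filter_sum_real)
  also have "\<dots> \<le> 2" using card_inj_le1[OF assms(1,2), of a] card_inj_le1[OF assms(1,3), of b] by simp
  finally show ?thesis .
qed

lemma success_bound:
  assumes G: "simple_graph n E" and e: "0 < e" "e < 1/2" and S: "indep E S" "S \<subseteq> {..<n}"
    and deg: "\<forall>v\<in>S. card (inc E v) \<le> K"
  defines "M \<equiv> (K + 1) div 2"
  defines "P \<equiv> (4*e*(1-e))^M / (4 * sqrt (real M + 1))"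
  shows "success_prob n E e dec \<le> 2 * (1 - P/2) ^ card S"
proof -
  have fE: "finite E" using simple_graph_finite[OF G] .
  have fS: "finite S" using S(2) finite_subset by blast
  define V where "V = {..<n}"
  define h where "h X Z = (if dec (observation E X Z) = X \<or> dec (observation E X Z) = V - X then 1 else (0::real))" for X Z
  define H where "H Z = (\<Sum>X\<in>Pow V. h X Z)" for Z
  define u where "u Z = H Z / 2^(n+1)" for Z
  have h01: "0 \<le> h X Z" for X Z by (simp add: h_def)
  have sp: "success_prob n E e dec = (\<Sum>Z\<in>Pow E. wt e E Z * H Z) / 2^n"
  proof -
    have "success_prob n E e dec = (\<Sum>X\<in>Pow V. \<Sum>Z\<in>Pow E. wt e E Z * h X Z) / 2^n"
      unfolding success_prob_def V_def h_def
    proof (intro arg_cong2[where f="(/)"] sum.cong refl)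
      fix X Z assume "Z \<in> Pow E"
      then have "card (E - Z) = card E - card Z" using fE by (simp add: card_Diff_subset finite_subset)
      then show "e ^ card Z * (1 - e) ^ (card E - card Z) *
          (if dec (observation E X Z) = X \<or> dec (observation E X Z) = {..<n} - X then 1 else 0) =
          wt e E Z * (if dec (observation E X Z) = X \<or> dec (observation E X Z) = {..<n} - X then 1 else 0)"
        by (simp add: wt_def)
    qed
    also have "\<dots> = (\<Sum>Z\<in>Pow E. wt e E Z * H Z) / 2^n"
      unfolding H_def sum_distrib_left by (subst sum.swap) simp
    finally show ?thesis .
  qed
  have orbit: "\<forall>Z. Z \<subseteq> E \<longrightarrow> (\<Sum>T\<in>Pow S. u (sd Z (\<Union>(inc E ` T)))) \<le> 1"
  proof (intro allI impI)
    fix Z assume Z: "Z \<subseteq> E"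
    have "(\<Sum>T\<in>Pow S. H (sd Z (\<Union>(inc E ` T)))) = (\<Sum>T\<in>Pow S. \<Sum>X\<in>Pow V. h (sd X T) (sd Z (\<Union>(inc E ` T))))"
    proof (rule sum.cong[OF refl])
      fix T assume T: "T \<in> Pow S"
      then have TV: "T \<subseteq> V" using S(2) V_def by auto
      have bij: "bij_betw (\<lambda>X. sd X T) (Pow V) (Pow V)"
        by (rule bij_betwI[where g="\<lambda>X. sd X T"]) (use TV in \<open>auto simp: sd_def\<close>)
      show "H (sd Z (\<Union>(inc E ` T))) = (\<Sum>X\<in>Pow V. h (sd X T) (sd Z (\<Union>(inc E ` T))))"
        unfolding H_def using sum.reindex_bij_betw[OF bij, of "\<lambda>X. h X (sd Z (\<Union>(inc E ` T)))"] by simp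
    qed
    also have "\<dots> = (\<Sum>X\<in>Pow V. \<Sum>T\<in>Pow S. h (sd X T) (sd Z (\<Union>(inc E ` T))))" by (rule sum.swap)
    also have "\<dots> \<le> (\<Sum>X\<in>Pow V. 2)"
    proof (rule sum_mono)
      fix X assume X: "X \<in> Pow V"
      define D where "D = dec (observation E X Z)"
      have "(\<Sum>T\<in>Pow S. h (sd X T) (sd Z (\<Union>(inc E ` T)))) =
            (\<Sum>T\<in>Pow S. if sd X T = D \<or> (\<lambda>T. V - sd X T) T = D then 1 else 0)"
        unfolding h_def D_def using obs_flip[OF G S(1)] by (intro sum.cong refl) auto
      also have "\<dots> \<le> 2"
      proof (rule two_hits)
        show "finite (Pow S)" using fS by simp
        show "inj_on (sd X) (Pow S)" by (rule sd_inj)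
        show "inj_on (\<lambda>T. V - sd X T) (Pow S)"
        proof (rule inj_onI)
          fix T1 T2 assume T: "T1 \<in> Pow S" "T2 \<in> Pow S" "V - sd X T1 = V - sd X T2"
          have "sd X T1 \<subseteq> V" "sd X T2 \<subseteq> V" using T(1,2) X S(2) V_def by (auto simp: sd_def)
          then have "sd X T1 = sd X T2" using T(3) by blast
          then show "T1 = T2" using sd_inj[of X UNIV] by (auto simp: inj_on_def)
        qed
      qed
      finally show "(\<Sum>T\<in>Pow S. h (sd X T) (sd Z (\<Union>(inc E ` T)))) \<le> 2" .
    qed
    also have "\<dots> = 2 * 2^n" using V_def by (simp add: card_Pow)
    finally have "(\<Sum>T\<in>Pow S. H (sd Z (\<Union>(inc E ` T)))) \<le> 2^(n+1)" by simp
    then show "(\<Sum>T\<in>Pow S. u (sd Z (\<Union>(inc E ` T)))) \<le> 1"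
      unfolding u_def by (simp add: sum_divide_distrib[symmetric])
  qed
  have u0: "\<forall>Z. u Z \<ge> 0" unfolding u_def H_def using h01 by (simp add: sum_nonneg)
  have incE: "\<forall>v\<in>S. inc E v \<subseteq> E" unfolding inc_def by auto
  have disj: "disjoint_family_on (inc E) S"
    unfolding disjoint_family_on_def
  proof (intro ballI impI)
    fix v w assume vw: "v \<in> S" "w \<in> S" "v \<noteq> w"
    show "inc E v \<inter> inc E w = {}"
    proof (rule ccontr)
      assume "inc E v \<inter> inc E w \<noteq> {}"
      then obtain p where p: "p \<in> E" "fst p = v \<or> snd p = v" "fst p = w \<or> snd p = w" unfolding inc_def by blast
      then have "fst p \<in> S" "snd p \<in> S" using vw by auto
      then show False using p(1) S(1) unfolding indep_def by (cases p) auto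
    qed
  qed
  have ob: "(\<Sum>Z\<in>Pow E. wt e E Z * u Z) \<le> (\<Prod>v\<in>S. mx e (inc E v) / 2)"
    by (rule orbit_bound[OF fS fE incE disj orbit u0]) (use e in auto)
  also have "\<dots> \<le> (\<Prod>v\<in>S. 1 - P/2)"
  proof (rule prod_mono)
    fix v assume v: "v \<in> S"
    have fin: "finite (inc E v)" using fE unfolding inc_def by simp
    have "mx e (inc E v) \<le> 2 - P"
      unfolding P_def M_def by (rule mx_bound2[OF fin e]) (use deg v in auto)
    moreover have "0 \<le> mx e (inc E v)" unfolding mx_def
      by (intro sum_nonneg max.coboundedI1 wt_nonneg) (use e in auto)
    ultimately show "0 \<le> mx e (inc E v) / 2 \<and> mx e (inc E v) / 2 \<le> 1 - P / 2" by auto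
  qed
  also have "\<dots> = (1 - P/2) ^ card S" by simp
  finally have ob2: "(\<Sum>Z\<in>Pow E. wt e E Z * u Z) \<le> (1 - P/2) ^ card S" .
  have "success_prob n E e dec = 2 * (\<Sum>Z\<in>Pow E. wt e E Z * u Z)"
    unfolding sp u_def by (simp add: sum_divide_distrib[symmetric] sum_distrib_left[symmetric] field_simps)
  then show ?thesis using ob2 by simp
qed



lemma KL_eq:
  assumes "0 < e" "e < 1/2"
  shows "KL_half e = - ln (4*e*(1-e)) / 2" "KL_half e > 0" "exp (- 2 * KL_half e) = 4*e*(1-e)"
proof -
  have p: "0 < 2*e" "0 < 2*(1-e)" using assms by auto
  have "4*e*(1-e) = (2*e) * (2*(1-e))" by simp
  then have "ln (4*e*(1-e)) = ln (2*e) + ln (2*(1-e))"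
    using p by (simp only: ln_mult_pos)
  moreover have "ln (1/(2*e)) = - ln (2*e)" "ln (1/(2*(1-e))) = - ln (2*(1-e))"
    using p by (simp_all add: ln_div)
  ultimately show K: "KL_half e = - ln (4*e*(1-e)) / 2" unfolding KL_half_def by simp
  have q: "4*e*(1-e) = 1 - (1-2*e)^2" by (simp add: power2_eq_square algebra_simps)
  have "0 < 4*e*(1-e)" using assms by simp
  moreover have "4*e*(1-e) < 1" unfolding q using assms by simp
  ultimately have "ln (4*e*(1-e)) < 0" by simp
  then show "KL_half e > 0" unfolding K by simp
  show "exp (- 2 * KL_half e) = 4*e*(1-e)" unfolding K using \<open>0 < 4*e*(1-e)\<close> by simp
qed

lemma low_deg_count:
  assumes G: "simple_graph n E"
  shows "real n - 2 * real (card E) / (real K + 1) \<le> real (card {v\<in>{..<n}. card (inc E v) \<le> K})"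
proof -
  define Hi where "Hi = {v\<in>{..<n}. \<not> card (inc E v) \<le> K}"
  define Lo where "Lo = {v\<in>{..<n}. card (inc E v) \<le> K}"
  have cn: "card Lo + card Hi = n"
  proof -
    have "Lo \<union> Hi = {..<n}" "Lo \<inter> Hi = {}" unfolding Lo_def Hi_def by auto
    then show ?thesis using card_Un_disjoint[of Lo Hi] unfolding Lo_def Hi_def by auto
  qed
  have "(K+1) * card Hi = (\<Sum>v\<in>Hi. K+1)" by simp
  also have "\<dots> \<le> (\<Sum>v\<in>Hi. card (inc E v))" by (rule sum_mono) (auto simp: Hi_def)
  also have "\<dots> \<le> (\<Sum>v<n. card (inc E v))" by (rule sum_mono2) (auto simp: Hi_def)
  also have "\<dots> = 2 * card E" by (rule handshake[OF G])
  finally have "(real K + 1) * real (card Hi) \<le> 2 * real (card E)"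
    by (metis (mono_tags, lifting) of_nat_1 of_nat_add of_nat_le_iff of_nat_mult of_nat_numeral)
  then have "real (card Hi) \<le> 2 * real (card E) / (real K + 1)"
    by (simp add: field_simps)
  moreover have "real (card Lo) + real (card Hi) = real n" using cn by (metis of_nat_add)
  ultimately show ?thesis unfolding Lo_def by linarith
qed

lemma one_minus_pow_le_exp:
  assumes "0 \<le> x" "x \<le> 1"
  shows "(1 - x) ^ s \<le> exp (- (real s * x))"
proof -
  have "(1 - x) ^ s \<le> exp (-x) ^ s"
    using assms by (intro power_mono) (auto simp: exp_ge_add_one_self[of "-x", simplified])
  also have "\<dots> = exp (- (real s * x))" by (simp add: exp_of_nat_mult[symmetric])
  finally show ?thesis .
qed

lemma per_n:
  assumes G: "simple_graph n E" and e: "0 < e" "e < 1/2" and dl: "0 < \<delta>" and tau: "0 \<le> \<tau>"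
    and n2: "n \<ge> 2" and dg: "avg_degree n E \<le> real n powr \<tau>"
    and sp: "success_prob n E e dec \<ge> 1/2"
  shows "((1+\<delta>) * avg_degree n E + 1) * KL_half e \<ge>
    (1 - 3*\<tau>/2) * ln n - (ln (8 * ln 4) + 3/2 * ln (2+\<delta>) - ln (\<delta>/(1+\<delta>)))"
proof -
  define d where "d = avg_degree n E"
  define D where "D = KL_half e"
  have Dpos: "D > 0" and expD: "exp (-2*D) = 4*e*(1-e)" using KL_eq[OF e] unfolding D_def by auto
  have n0: "real n > 0" using n2 by simp
  have d0: "d \<ge> 0" unfolding d_def avg_degree_def by simp
  have dn: "2 * real (card E) = d * real n" unfolding d_def avg_degree_def using n0 by simp
  define K where "K = nat \<lfloor>(1+\<delta>) * d\<rfloor>"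
  have K1: "real K \<le> (1+\<delta>) * d" unfolding K_def using d0 dl by (simp add: of_nat_nat)
  have K2: "(1+\<delta>) * d < real K + 1"
  proof -
    have x0: "0 \<le> (1+\<delta>)*d" using d0 dl by simp
    then have "real K = of_int \<lfloor>(1+\<delta>)*d\<rfloor>" unfolding K_def by simp
    moreover have "(1+\<delta>)*d < of_int \<lfloor>(1+\<delta>)*d\<rfloor> + 1" by (rule real_of_int_floor_add_one_gt)
    ultimately show ?thesis by linarith
  qed
  define A where "A = real K + 1"
  have A1: "A \<ge> 1" unfolding A_def by simp
  define Lo where "Lo = {v\<in>{..<n}. card (inc E v) \<le> K}"
  have fLo: "finite Lo" unfolding Lo_def by simp
  have cLo: "real n - 2 * real (card E) / A \<le> real (card Lo)"
    unfolding Lo_def A_def by (rule low_deg_count[OF G])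
  have "2 * real (card E) / A = real n * (d / A)" using dn by (simp add: field_simps)
  also have "\<dots> \<le> real n * (1 / (1+\<delta>))"
  proof (intro mult_left_mono)
    show "d / A \<le> 1 / (1+\<delta>)" using K2 dl A1 unfolding A_def by (simp add: field_simps)
  qed simp
  finally have X: "2 * real (card E) / A \<le> real n * (1 / (1+\<delta>))" .
  have "real n - real n * (1/(1+\<delta>)) = real n * (\<delta>/(1+\<delta>))" using dl by (simp add: field_simps)
  then have cLo2: "real n * (\<delta>/(1+\<delta>)) \<le> real (card Lo)" using cLo X by linarith
  obtain S where S: "S \<subseteq> Lo" "indep E S" "card Lo \<le> (K+1) * card S"
    using greedy_indep[OF G fLo, of K] unfolding Lo_def by auto
  have SV: "S \<subseteq> {..<n}" and degS: "\<forall>v\<in>S. card (inc E v) \<le> K" using S(1) unfolding Lo_def by auto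
  define s where "s = real (card S)"
  have s1: "real (card Lo) \<le> A * s"
  proof -
    have "real (card Lo) \<le> real ((K+1) * card S)" using S(3) by (simp only: of_nat_le_iff)
    then show ?thesis unfolding A_def s_def by (simp add: algebra_simps)
  qed
  define M where "M = (K + 1) div 2"
  define P where "P = (4*e*(1-e))^M / (4 * sqrt (real M + 1))"
  have qq: "4*e*(1-e) = 1 - (1-2*e)^2" by (simp add: power2_eq_square algebra_simps)
  have "(1-2*e)^2 \<le> 1" using e by (intro power_le_one) auto
  then have q01: "0 \<le> 4*e*(1-e)" "4*e*(1-e) \<le> 1" unfolding qq by auto
  have P0: "0 \<le> P" unfolding P_def using q01 by simp
  have P1: "P \<le> 1"
  proof -
    have "(4*e*(1-e))^M \<le> 1" using q01 by (simp add: power_le_one)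
    moreover have "1 \<le> sqrt (real M + 1)" by simp
    then have "1 \<le> 4 * sqrt (real M + 1)" by linarith
    ultimately show ?thesis unfolding P_def by (simp add: divide_le_eq_1)
  qed
  have "success_prob n E e dec \<le> 2 * (1 - P/2) ^ card S"
    unfolding P_def M_def by (rule success_bound[OF G e S(2) SV degS])
  also have "\<dots> \<le> 2 * exp (- (s * (P/2)))"
    unfolding s_def using P0 P1 by (intro mult_left_mono one_minus_pow_le_exp) auto
  finally have "1/2 \<le> 2 * exp (- (s * (P/2)))" using sp by linarith
  then have h4: "1/4 \<le> exp (- (s * (P/2)))" by simp
  have "ln (1/4) \<le> ln (exp (- (s * (P/2))))" using h4 by (subst ln_le_cancel_iff) auto
  then have "ln (1/4) \<le> - (s * (P/2))" by simp
  then have sP: "s * P \<le> 2 * ln 4" by (simp add: ln_div)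
  have qM: "(4*e*(1-e))^M \<ge> exp (- (A * D))"
  proof -
    have "(4*e*(1-e))^M = exp (real M * (-2*D))" unfolding expD[symmetric] by (simp only: exp_of_nat_mult)
    moreover have "real M * (-2*D) \<ge> - (A * D)"
    proof -
      have "2 * real M \<le> A" unfolding M_def A_def by linarith
      then have "2 * real M * D \<le> A * D" using Dpos by (intro mult_right_mono) auto
      then show ?thesis by (simp add: algebra_simps)
    qed
    ultimately show ?thesis by simp
  qed
  have sq: "sqrt (real M + 1) \<le> sqrt A" unfolding A_def M_def by simp
  have PA: "P \<ge> exp (- (A * D)) / (4 * sqrt A)"
    unfolding P_def using qM sq A1 q01 by (intro frac_le) auto
  have s0: "s \<ge> 0" unfolding s_def by simp
  have a1: "s * (exp (- (A * D)) / (4 * sqrt A)) \<le> 2 * ln 4" using mult_left_mono[OF PA s0] sP by linarith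
  have sqA: "sqrt A > 0" using A1 by simp
  have "s * exp (- (A * D)) = 4 * sqrt A * (s * (exp (- (A * D)) / (4 * sqrt A)))" using sqA by (simp add: field_simps)
  also have "\<dots> \<le> 4 * sqrt A * (2 * ln 4)" using a1 sqA by (intro mult_left_mono) auto
  finally have "s * exp (- (A * D)) \<le> 8 * ln 4 * sqrt A" by (simp add: mult_ac)
  then have sle: "s \<le> 8 * ln 4 * sqrt A * exp (A * D)" by (simp add: exp_minus field_simps)
  have nA: "real n * (\<delta>/(1+\<delta>)) \<le> A * s" using cLo2 s1 by linarith
  have "A * s \<le> A * (8 * ln 4 * sqrt A * exp (A * D))" using A1 sle by (intro mult_left_mono) auto
  also have "\<dots> = (8 * ln 4) * (A * sqrt A) * exp (A * D)" by (simp add: mult_ac)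
  finally have main: "real n * (\<delta>/(1+\<delta>)) \<le> (8 * ln 4) * (A * sqrt A) * exp (A * D)"
    using nA by linarith
  have l4: "ln 4 > (0::real)" by simp
  have pos: "0 < real n * (\<delta>/(1+\<delta>))" using n0 dl by simp
  have "ln (real n * (\<delta>/(1+\<delta>))) \<le> ln ((8 * ln 4) * (A * sqrt A) * exp (A * D))"
    using main pos by (rule ln_mono)
  moreover have "ln (real n * (\<delta>/(1+\<delta>))) = ln n + ln (\<delta>/(1+\<delta>))"
    using n0 dl by (intro ln_mult_pos) auto
  moreover have "ln ((8 * ln 4) * (A * sqrt A) * exp (A * D)) = ln (8 * ln 4) + (ln A + ln A / 2) + A * D"
    using A1 l4 by (simp add: ln_mult ln_sqrt)
  ultimately have L: "ln n + ln (\<delta>/(1+\<delta>)) \<le> ln (8 * ln 4) + (ln A + ln A / 2) + A * D"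
    by linarith
  have "A \<le> (1+\<delta>) * d + 1" using K1 unfolding A_def by simp
  also have "\<dots> \<le> (1+\<delta>) * real n powr \<tau> + real n powr \<tau>"
    using dg dl d_def n2 tau by (intro add_mono mult_left_mono) (auto simp: ge_one_powr_ge_zero)
  also have "\<dots> = (2+\<delta>) * real n powr \<tau>" by (simp add: algebra_simps)
  finally have "ln A \<le> ln ((2+\<delta>) * real n powr \<tau>)" using A1 by simp
  also have "\<dots> = ln (2+\<delta>) + \<tau> * ln n" using dl n0 by (simp add: ln_mult ln_powr)
  finally have lA: "ln A \<le> ln (2+\<delta>) + \<tau> * ln n" .
  have AD: "A * D \<le> ((1+\<delta>) * d + 1) * D" using K1 Dpos unfolding A_def by (intro mult_right_mono) auto
  have tl: "(1 - 3*\<tau>/2) * ln n = ln n - 3/2 * (\<tau> * ln n)" by (simp add: algebra_simps)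
  show ?thesis unfolding d_def[symmetric] D_def[symmetric] tl using L lA AD by linarith
qed



lemma ev_ln_ge: "eventually (\<lambda>n. ln (real n) \<ge> X) sequentially"
proof -
  have "filterlim (\<lambda>n. ln (real n)) at_top sequentially"
    by (rule filterlim_compose[OF ln_at_top filterlim_real_sequentially])
  then show ?thesis by (simp add: filterlim_at_top)
qed

lemma core:
  fixes G :: "nat \<Rightarrow> (nat \<times> nat) set" and eps :: "nat \<Rightarrow> real" and \<tau> :: real
  assumes graphs: "\<And>n. simple_graph n (G n)"
    and eps_range: "\<And>n. 0 < eps n \<and> eps n < 1/2"
    and tau: "0 < \<tau>" "\<tau> < 2/3"
    and deg: "\<And>n. avg_degree n (G n) \<le> real n powr \<tau>"
    and sp: "eventually (\<lambda>n. success_prob n (G n) (eps n) (dec n) \<ge> 1/2) sequentially"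
    and c: "c > 0"
  shows "eventually (\<lambda>n. avg_degree n (G n) / ln (real n) \<ge>
            (1 - 3*\<tau>/2 - c) / KL_half (eps n) - 1 / ln (real n)) sequentially"
proof -
  define a where "a = 1 - 3*\<tau>/2"
  have a: "0 < a" "a \<le> 1" using tau unfolding a_def by auto
  define C where "C = ln (8 * ln 4) + 3/2 * ln (2+c/2) - ln ((c/2)/(1+c/2))"
  have ev: "eventually (\<lambda>n. n \<ge> 2 \<and> success_prob n (G n) (eps n) (dec n) \<ge> 1/2 \<and>
      ln (real n) \<ge> 2 * C / c \<and> ln (real n) > 0) sequentially"
    using eventually_ge_at_top[of 2] sp ev_ln_ge[of "2*C/c"] ev_ln_ge[of 1]
    by eventually_elim auto
  show ?thesis unfolding a_def[symmetric] using ev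
  proof eventually_elim
    case (elim n)
    define d where "d = avg_degree n (G n)"
    define D where "D = KL_half (eps n)"
    define L where "L = ln (real n)"
    have e: "0 < eps n" "eps n < 1/2" using eps_range by auto
    have Dp: "D > 0" unfolding D_def using KL_eq[OF e] by simp
    have Lp: "L > 0" using elim unfolding L_def by simp
    have cL: "c/2 * L \<ge> C" using elim c unfolding L_def by (simp add: field_simps)
    have pn: "((1+c/2) * d + 1) * D \<ge> a * L - C"
      using per_n[OF graphs e _ _ _ deg, of "c/2" n "dec n"] elim c tau
      unfolding d_def D_def L_def C_def a_def by auto
    have h1: "(1+c/2) * (d*D) \<ge> a*L - C - D" using pn by (simp add: algebra_simps)
    have f1: "(a-c)*L \<le> L" using mult_right_mono[of "a-c" 1 L] a c Lp by simp
    then have f2: "c/2*((a-c)*L) \<le> c/2*L" using c by (intro mult_left_mono) auto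
    have f3: "0 \<le> c/2*D" using c Dp by simp
    have "(1+c/2)*((a-c)*L - D) = (a-c)*L + c/2*((a-c)*L) - D - c/2*D" by (simp add: algebra_simps)
    then have h2: "(1+c/2)*((a-c)*L - D) \<le> (1+c/2) * (d*D)" 
    proof -
      have "(a-c)*L = a*L - c*L" "c/2*L = (c*L)/2" by (simp_all add: algebra_simps)
      then show ?thesis using \<open>(1+c/2)*((a-c)*L - D) = _\<close> h1 f2 f3 cL by linarith
    qed
    then have h3: "(a-c)*L - D \<le> d*D" using c by (simp add: mult_le_cancel_left_pos)
    have e1: "(a-c)/D - 1/L = ((a-c)*L - D)/(L*D)" using Dp Lp by (simp add: field_simps)
    have e2: "d/L = (d*D)/(L*D)" using Dp by simp
    have "((a-c)*L - D)/(L*D) \<le> (d*D)/(L*D)" using h3 Dp Lp by (intro divide_right_mono) auto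
    then show ?case using e1 e2 unfolding d_def[symmetric] D_def[symmetric] L_def[symmetric] by simp
  qed
qed

lemma part2_step:
  fixes a c c' d L D x e :: real
  assumes a: "0 < a" "a \<le> 1" and c: "0 < c" and c': "0 < c'" "c' \<le> c/8" "c' \<le> a/2"
    and e: "0 < e" "e < 1/2" and D: "D = KL_half e" and x: "x = (1 - 2*e)^2"
    and xs: "x \<le> c/8" and L: "L > 0" "1/L \<le> c/4"
    and core: "d/L \<ge> (a - c')/D - 1/L"
  shows "d/L \<ge> (2*a - c)/x"
proof -
  define y where "y = 1 - x"
  have ye: "4*e*(1-e) = y" unfolding y_def x by (simp add: power2_eq_square algebra_simps)
  have Dy: "D = - ln y / 2" and Dp: "D > 0" using KL_eq[OF e] unfolding D ye by auto
  have yp: "y > 0" using e ye[symmetric] by simp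
  have x0: "x > 0" unfolding x using e by simp
  have x1: "x \<le> 1" using yp unfolding y_def by simp
  have "ln (1/y) \<le> 1/y - 1" using yp by (intro ln_le_minus_one) simp
  moreover have "ln (1/y) = - ln y" using yp by (simp add: ln_div)
  ultimately have "2 * D \<le> 1/y - 1" unfolding Dy by simp
  also have "1/y - 1 = x / y" using yp unfolding y_def by (simp add: field_simps)
  finally have "2 * D \<le> x / y" .
  then have yD: "2*y*D \<le> x" using yp by (simp add: field_simps)
  have r: "2*y/x \<le> 1/D" using yD x0 Dp by (simp add: field_simps)
  have ac: "0 \<le> a - c'" using c' a by simp
  have "(a-c')*(2*y/x) \<le> (a-c')/D" using mult_left_mono[OF r ac] by simp
  then have s1: "(a-c')*(2*y/x) - c/4 \<le> d/L" using core L by linarith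
  have f1: "(a-c')*x \<le> x" using mult_right_mono[of "a-c'" 1 x] a c' x0 by simp
  have f2: "c/4*x \<le> c/4" using mult_left_mono[OF x1, of "c/4"] c by simp
  define t where "t = (a-c')*x"
  define u where "u = c/4*x"
  have eq: "2*(a-c')*y - c/4*x = 2*(a-c') - 2*t - u" unfolding y_def t_def u_def by (simp add: algebra_simps)
  have "2*a - c \<le> 2*(a-c') - 2*t - u" using f1 f2 c c' xs unfolding t_def[symmetric] u_def[symmetric] by (simp add: field_simps)
  then have k: "2*a - c \<le> 2*(a-c')*y - c/4*x" using eq by linarith
  have "(2*a - c)/x \<le> (2*(a-c')*y - c/4*x)/x" using k x0 by (intro divide_right_mono) auto
  also have "\<dots> = (a-c')*(2*y/x) - c/4" using x0 by (simp add: field_simps)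
  finally show ?thesis using s1 by linarith
qed

theorem theorem1:
  fixes G :: "nat \<Rightarrow> (nat \<times> nat) set" and eps :: "nat \<Rightarrow> real" and \<tau> :: real
  assumes graphs: "\<And>n. simple_graph n (G n)"
    and eps_range: "\<And>n. 0 < eps n \<and> eps n < 1/2"
    and tau: "0 < \<tau>" "\<tau> < 2/3"
    and deg: "\<And>n. avg_degree n (G n) \<le> real n powr \<tau>"
    and rec: "exact_recovery_whp G eps"
  shows "(\<exists>r. r \<in> o(\<lambda>n. 1 / KL_half (eps n)) \<and>
           (\<forall>\<^sub>F n in sequentially.
              avg_degree n (G n) / ln (real n)
                \<ge> (1 - 3 * \<tau> / 2) / KL_half (eps n) - 1 / ln (real n) + r n))
       \<and> ((eps \<longlonglongrightarrow> 1/2) \<longrightarrow>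
           (\<exists>r. r \<in> o(\<lambda>n. 1 / (1 - 2 * eps n)^2) \<and>
             (\<forall>\<^sub>F n in sequentially.
                avg_degree n (G n) / ln (real n)
                  \<ge> 2 * (1 - 3 * \<tau> / 2) / (1 - 2 * eps n)^2 + r n)))"
proof -
  obtain dec where lim: "(\<lambda>n. success_prob n (G n) (eps n) (dec n)) \<longlonglongrightarrow> 1"
    using rec unfolding exact_recovery_whp_def by blast
  have sp: "eventually (\<lambda>n. success_prob n (G n) (eps n) (dec n) \<ge> 1/2) sequentially"
    using order_tendstoD(1)[OF lim, of "1/2"] by (auto elim: eventually_mono)
  define a where "a = 1 - 3 * \<tau> / 2"
  have a: "0 < a" "a \<le> 1" using tau unfolding a_def by auto
  define d where "d n = avg_degree n (G n)" for n
  define D where "D n = KL_half (eps n)" for n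
  define L where "L n = ln (real n)" for n :: nat
  have Dp: "D n > 0" for n using KL_eq[of "eps n"] eps_range[of n] unfolding D_def by auto
  have cor: "eventually (\<lambda>n. d n / L n \<ge> (a - c) / D n - 1 / L n) sequentially" if "c > 0" for c
    using core[OF graphs eps_range tau deg sp that] unfolding a_def d_def D_def L_def .
  have P1: "\<exists>r. r \<in> o(\<lambda>n. 1 / KL_half (eps n)) \<and>
           (\<forall>\<^sub>F n in sequentially. avg_degree n (G n) / ln (real n)
                \<ge> (1 - 3 * \<tau> / 2) / KL_half (eps n) - 1 / ln (real n) + r n)"
  proof (intro exI conjI)
    define r where "r n = min 0 (d n / L n - (a / D n - 1 / L n))" for n
    show "r \<in> o(\<lambda>n. 1 / KL_half (eps n))"
    proof (rule landau_o.smallI)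
      fix c :: real assume c: "c > 0"
      show "eventually (\<lambda>n. norm (r n) \<le> c * norm (1 / KL_half (eps n))) at_top"
        using cor[OF c]
      proof eventually_elim
        case (elim n)
        have "(a - c) / D n = a / D n - c / D n" by (simp add: diff_divide_distrib)
        then have "norm (r n) \<le> c / D n" using elim c Dp[of n] unfolding r_def by (auto simp: min_def)
        then show ?case using Dp[of n] unfolding D_def by simp
      qed
    qed
    show "\<forall>\<^sub>F n in sequentially. avg_degree n (G n) / ln (real n)
                \<ge> (1 - 3 * \<tau> / 2) / KL_half (eps n) - 1 / ln (real n) + r n"
      unfolding r_def d_def D_def L_def a_def by (intro always_eventually allI) (simp add: min_def)
  qed
  have P2: "\<exists>r. r \<in> o(\<lambda>n. 1 / (1 - 2 * eps n)^2) \<and>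
             (\<forall>\<^sub>F n in sequentially. avg_degree n (G n) / ln (real n)
                  \<ge> 2 * (1 - 3 * \<tau> / 2) / (1 - 2 * eps n)^2 + r n)"
    if lim2: "eps \<longlonglongrightarrow> 1/2"
  proof (intro exI conjI)
    define x where "x n = (1 - 2 * eps n)^2" for n
    have xp: "x n > 0" for n unfolding x_def using eps_range[of n] by simp
    have x0: "x \<longlonglongrightarrow> 0"
    proof -
      have "(\<lambda>n. (1 - 2 * eps n)^2) \<longlonglongrightarrow> (1 - 2 * (1/2))^2" by (intro tendsto_intros lim2)
      then show ?thesis unfolding x_def by simp
    qed
    define r where "r n = min 0 (d n / L n - 2 * a / x n)" for n
    show "r \<in> o(\<lambda>n. 1 / (1 - 2 * eps n)^2)"
    proof (rule landau_o.smallI)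
      fix c :: real assume c: "c > 0"
      define c' where "c' = min (c/8) (a/2)"
      have c': "0 < c'" "c' \<le> c/8" "c' \<le> a/2" using c a unfolding c'_def by auto
      have c8: "(0::real) < c/8" using c by simp
      have ev: "eventually (\<lambda>n. d n / L n \<ge> (a - c') / D n - 1 / L n \<and> x n < c/8 \<and>
           ln (real n) \<ge> 4 / c \<and> ln (real n) \<ge> 1) sequentially"
        using cor[OF c'(1)] order_tendstoD(2)[OF x0 c8] ev_ln_ge[of "4/c"] ev_ln_ge[of 1]

        by eventually_elim auto
      show "eventually (\<lambda>n. norm (r n) \<le> c * norm (1 / (1 - 2 * eps n)^2)) at_top"
        using ev
      proof eventually_elim
        case (elim n)
        have Lp: "L n > 0" using elim unfolding L_def by simp
        have iL: "1 / L n \<le> c / 4" using elim Lp c unfolding L_def by (simp add: field_simps)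
        have st: "d n / L n \<ge> (2*a - c) / x n"
          by (rule part2_step[OF a c c' _ _ D_def x_def _ Lp iL]) (use elim eps_range[of n] in auto)
        have "(2*a - c) / x n = 2*a / x n - c / x n" by (simp add: diff_divide_distrib)
        then have "norm (r n) \<le> c / x n" using st c xp[of n] unfolding r_def by (auto simp: min_def)
        then show ?case using xp[of n] unfolding x_def by simp
      qed
    qed
    show "\<forall>\<^sub>F n in sequentially. avg_degree n (G n) / ln (real n)
                  \<ge> 2 * (1 - 3 * \<tau> / 2) / (1 - 2 * eps n)^2 + r n"
      unfolding r_def d_def L_def a_def x_def by (intro always_eventually allI) (simp add: min_def)
  qed
  show ?thesis using P1 P2 by blast
qed


end
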